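(* Let $n\ge 2$ and let $S=\{A_1,\dots,A_m\}$ be a finite set of real $n\times n$ matrices such that every $A\in S$ satisfies $A\mathbf{1}=\mathbf{1}$ and $\|Ax\|_{\mathcal{P}}\le\|x\|_{\mathcal{P}}$ for all $x$. Then there exists a sequence $\sigma:\mathbb{N}\to\{1,\dots,m\}$ such that for every initial condition $x_0$ the trajectory of $x(t+1)=A_{\sigma(t)}x(t)$, $x(0)=x_0$, converges to a multiple of $\mathbf{1}$ if and only if in the graph of faces $\mathcal{G}$ of $S$ there is a path from every node to node 1.
   Context: $\mathbf{1}=(1,\dots,1)^\top$, $\|x\|_{\mathcal{P}}=\tfrac12(\max_i x_i-\min_i x_i)$, $\mathcal{P}=\{x:\|x\|_{\mathcal{P}}\le 1\}$, which satisfies $\mathcal{P}=-\mathcal{P}$. A face of a polyhedron $\mathcal{Q}$ is a non-empty subset $F$ with $F=\mathcal{Q}$ or $F=\mathcal{Q}\cap\{x:b^\top x=c\}$ where $b^\top x\le c$ on $\mathcal{Q}$; an open face is the relative interior of a face; a proper open face is the relative interior of a face other than $\mathcal{Q}$. If $F$ is a proper open face of $\mathcal{P}$, so is $-F$, and $\pm F$ denotes $F\cup(-F)$. The graph of faces $\mathcal{G}$ is the directed graph with one node for each pair $\{F,-F\}$ of opposite proper open faces of $\mathcal{P}$ and one additional node, "node 1", representing $\operatorname{int}(\mathcal{P})$; there is an edge from the node of $F_i$ to the node of $F_j$ whenever some $A\in S$ satisfies $AF_i\subseteq\pm F_j$, an edge from the node of $F_i$ to node 1 whenever some $A\in S$ satisfies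 $AF_i\subseteq\operatorname{int}(\mathcal{P})$, and a self-loop at node 1. *)

theory Defs
  imports "HOL-Analysis.Analysis"
begin

definition normP :: "real^'n \<Rightarrow> real" where
  "normP x = (Max (range (\<lambda>i. x $ i)) - Min (range (\<lambda>i. x $ i))) / 2"

definition polP :: "(real^'n) set" where
  "polP = {x. normP x \<le> 1}"

definition is_face :: "(real^'n) set \<Rightarrow> (real^'n) set \<Rightarrow> bool" where
  "is_face Q F \<longleftrightarrow> F \<noteq> {} \<and>
     (F = Q \<or> (\<exists>b c. (\<forall>x\<in>Q. b \<bullet> x \<le> c) \<and> F = Q \<inter> {x. b \<bullet> x = c}))"

definition proper_open_face :: "(real^'n) set \<Rightarrow> bool" where
  "proper_open_face G \<longleftrightarrow>
     (\<exists>F. is_face polP F \<and> F \<noteq> polP \<and> G = rel_interior F)"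

definition pmset :: "(real^'n) set \<Rightarrow> (real^'n) set" where
  "pmset F = F \<union> uminus ` F"

text \<open>Nodes of the graph of faces: Some {F, -F} for a proper open face F,
  and None for node 1 (representing int P).\<close>
definition face_node :: "(real^'n) set set option \<Rightarrow> bool" where
  "face_node N \<longleftrightarrow> N = None \<or> (\<exists>F. proper_open_face F \<and> N = Some {F, uminus ` F})"

definition face_edge ::
  "(real^'n^'n) set \<Rightarrow> (real^'n) set set option \<Rightarrow> (real^'n) set set option \<Rightarrow> bool" where
  "face_edge S N N' \<longleftrightarrow> face_node N \<and> face_node N' \<and>
     (case (N, N') of
        (None, None) \<Rightarrow> True
      | (None, Some _) \<Rightarrow> False
      | (Some FF, None) \<Rightarrow> (\<exists>F\<in>FF. \<exists>A\<in>S. (\<lambda>x. A *v x) ` F \<subseteq> interior polP)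
      | (Some FF, Some GG) \<Rightarrow>
          (\<exists>F\<in>FF. \<exists>G\<in>GG. \<exists>A\<in>S. (\<lambda>x. A *v x) ` F \<subseteq> pmset G))"

primrec traj :: "(nat \<Rightarrow> real^'n^'n) \<Rightarrow> (nat \<Rightarrow> nat) \<Rightarrow> real^'n \<Rightarrow> nat \<Rightarrow> real^'n" where
  "traj A \<sigma> x0 0 = x0"
| "traj A \<sigma> x0 (Suc t) = A (\<sigma> t) *v traj A \<sigma> x0 t"

end

theory Submission
  imports Defs
begin


lemma mx_ge: "(x::real^'n) $ i \<le> Max (range (\<lambda>i. x $ i))"
  by (simp add: finite_UNIV)
lemma mn_le: "Min (range (\<lambda>i. (x::real^'n) $ i)) \<le> x $ i"
  by (simp add: finite_UNIV)
lemma mx_ex: "\<exists>i. (x::real^'n) $ i = Max (range (\<lambda>i. x $ i))"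
proof -
  have "Max (range (\<lambda>i. x $ i)) \<in> range (\<lambda>i. x $ i)"
    by (rule Max_in) (auto simp: finite_UNIV)
  thus ?thesis by (metis (mono_tags) rangeE)
qed
lemma mn_ex: "\<exists>i. (x::real^'n) $ i = Min (range (\<lambda>i. x $ i))"
proof -
  have "Min (range (\<lambda>i. x $ i)) \<in> range (\<lambda>i. x $ i)"
    by (rule Min_in) (auto simp: finite_UNIV)
  thus ?thesis by (metis (mono_tags) rangeE)
qed

lemma nP_le: "(x::real^'n) $ i - x $ j \<le> 2 * normP x"
proof -
  have "2 * normP x = Max (range (\<lambda>i. x $ i)) - Min (range (\<lambda>i. x $ i))" by (simp add: normP_def)
  thus ?thesis using mx_ge[of x i] mn_le[of x j] by linarith
qed

lemma nP_ex: "\<exists>i j. (x::real^'n) $ i - x $ j = 2 * normP x"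
proof -
  obtain i j where "x $ i = Max (range (\<lambda>i. x $ i))" "x $ j = Min (range (\<lambda>i. x $ i))"
    using mx_ex[of x] mn_ex[of x] by blast
  thus ?thesis unfolding normP_def by (intro exI[of _ i] exI[of _ j]) simp
qed

lemma nP_unique:
  assumes "\<And>i j. (x::real^'n) $ i - x $ j \<le> 2 * r" "(x::real^'n) $ i - x $ j = 2 * r"
  shows "normP x = r"
  using assms nP_le[of x] nP_ex[of x] by (metis antisym mult_le_cancel_left_pos zero_less_numeral)

lemma nP_nonneg: "normP (x::real^'n) \<ge> 0"
  using nP_le[of x i i] by simp

lemma nP_uminus: "normP (- (x::real^'n)) = normP x"
proof -
  obtain i j where "x $ i - x $ j = 2 * normP x" using nP_ex by blast
  thus ?thesis
  proof (intro nP_unique[of _ _ j i])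
    fix k l show "(- x) $ k - (- x) $ l \<le> 2 * normP x" using nP_le[of x l k] by simp
  qed (simp)
qed

lemma nP_scale: "c \<ge> 0 \<Longrightarrow> normP (c *\<^sub>R (x::real^'n)) = c * normP x"
proof -
  assume c: "c \<ge> 0"
  obtain i j where e: "x $ i - x $ j = 2 * normP x" using nP_ex by blast
  show ?thesis
  proof (rule nP_unique[of _ _ i j])
    fix k l
    have "c * (x $ k - x $ l) \<le> c * (2 * normP x)" using c nP_le by (rule mult_left_mono[rotated])
    thus "(c *\<^sub>R x) $ k - (c *\<^sub>R x) $ l \<le> 2 * (c * normP x)" by (simp add: algebra_simps)
  next
    show "(c *\<^sub>R x) $ i - (c *\<^sub>R x) $ j = 2 * (c * normP x)" using e
      by (simp add: algebra_simps)
  qed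
qed

lemma nP_add_const: "normP ((x::real^'n) + c *\<^sub>R vec 1) = normP x"
proof -
  obtain i j where "x $ i - x $ j = 2 * normP x" using nP_ex by blast
  thus ?thesis by (intro nP_unique[of _ _ i j]) (auto simp: nP_le)
qed

lemma nP_diff_const: "normP ((x::real^'n) - c *\<^sub>R vec 1) = normP x"
  using nP_add_const[of x "-c"] by simp

lemma nP_add: "normP ((x::real^'n) + y) \<le> normP x + normP y"
proof -
  obtain i j where "(x+y) $ i - (x+y) $ j = 2 * normP (x+y)" using nP_ex by blast
  moreover have "x $ i - x $ j \<le> 2 * normP x" "y $ i - y $ j \<le> 2 * normP y" by (rule nP_le)+
  ultimately show ?thesis by simp
qed

lemma nP_le_norm: "normP (z::real^'n) \<le> norm z"
proof -
  obtain i j where "z $ i - z $ j = 2 * normP z" using nP_ex by blast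
  moreover have "\<bar>z $ i\<bar> \<le> norm z" "\<bar>z $ j\<bar> \<le> norm z" by (rule component_le_norm_cart)+
  ultimately show ?thesis by linarith
qed

lemma nP_lip: "\<bar>normP (x::real^'n) - normP y\<bar> \<le> norm (x - y)"
proof -
  have "normP x \<le> normP y + normP (x - y)" using nP_add[of y "x - y"] by simp
  moreover have "normP y \<le> normP x + normP (y - x)" using nP_add[of x "y - x"] by simp
  moreover have "normP (x - y) \<le> norm (x - y)" "normP (y - x) \<le> norm (x - y)"
    using nP_le_norm[of "x-y"] nP_le_norm[of "y-x"] by (auto simp: norm_minus_commute)
  ultimately show ?thesis by linarith
qed

lemma nP_cont: "continuous_on UNIV (normP :: real^'n \<Rightarrow> real)"
  unfolding continuous_on_iff
  by (metis dist_norm dist_real_def nP_lip order_le_less_trans)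

lemma nP_zero: "normP (x::real^'n) = 0 \<Longrightarrow> x = (x $ k) *\<^sub>R vec 1"
proof -
  assume "normP x = 0"
  hence "\<And>i j. x $ i \<le> x $ j" using nP_le[of x] by (metis diff_le_0_iff_le mult_zero_right)
  hence "\<And>i. x $ i = x $ k" by (meson antisym)
  thus ?thesis by (simp add: vec_eq_iff)
qed

lemma nP_const: "normP (c *\<^sub>R vec 1 :: real^'n) = 0"
  by (rule nP_unique[of _ _ undefined undefined]) simp_all

lemma nP_le1: "normP (x::real^'n) \<le> 1 \<longleftrightarrow> (\<forall>i j. x $ i - x $ j \<le> 2)"
  using nP_le[of x] nP_ex[of x] by (smt (verit))

lemma nP_lt1: "normP (x::real^'n) < 1 \<longleftrightarrow> (\<forall>i j. x $ i - x $ j < 2)"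
  using nP_le[of x] nP_ex[of x] by (smt (verit))

lemma polP_eq: "(polP :: (real^'n) set) = (\<Inter>(i,j)\<in>UNIV. {x. (axis i 1 - axis j 1) \<bullet> x \<le> 2})"
  by (auto simp: polP_def nP_le1 inner_diff_left inner_axis inner_axis')

lemma polyhedron_polP: "polyhedron (polP :: (real^'n) set)"
  unfolding polP_eq by (intro polyhedron_Inter) (auto simp: polyhedron_halfspace_le)

lemma convex_polP: "convex (polP :: (real^'n) set)"
  by (simp add: polyhedron_imp_convex polyhedron_polP)

lemma interior_polP: "interior (polP :: (real^'n) set) = {x. normP x < 1}"
proof
  have "open {x::real^'n. normP x < 1}"
    using nP_cont by (intro open_Collect_less) auto
  moreover have "{x::real^'n. normP x < 1} \<subseteq> polP" by (auto simp: polP_def)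
  ultimately show "{x::real^'n. normP x < 1} \<subseteq> interior polP" using interior_maximal by blast
next
  show "interior (polP :: (real^'n) set) \<subseteq> {x. normP x < 1}"
  proof
    fix x :: "real^'n" assume "x \<in> interior polP"
    then obtain e where e: "e > 0" "ball x e \<subseteq> polP" by (meson mem_interior)
    define d where "d = e / (2 * (norm x + 1))"
    have d: "d > 0" using e unfolding d_def by (intro divide_pos_pos) (auto simp: add_pos_nonneg, smt (verit) norm_ge_zero)
    have "dist x ((1 + d) *\<^sub>R x) = d * norm x"
      using d by (simp add: dist_norm algebra_simps)
    also have "\<dots> = e * (norm x / (2 * (norm x + 1)))" by (simp add: d_def)
    also have "\<dots> < e * 1"
    proof (rule mult_strict_left_mono[OF _ e(1)])
      have "norm x < 2 * (norm x + 1)" by (smt (verit) norm_ge_zero)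
      thus "norm x / (2 * (norm x + 1)) < 1" by (subst divide_less_eq_1_pos) (auto, smt (verit) norm_ge_zero)
    qed
    finally have "(1 + d) *\<^sub>R x \<in> polP" using e by auto
    hence h: "(1 + d) * normP x \<le> 1" using nP_scale[of "1+d" x] d by (simp add: polP_def)
    show "x \<in> {x. normP x < 1}"
    proof (rule ccontr)
      assume "x \<notin> {x. normP x < 1}"
      hence "normP x \<ge> 1" by simp
      hence "d * 1 \<le> d * normP x" using d by (intro mult_left_mono) auto
      with h \<open>normP x \<ge> 1\<close> d show False by (simp add: algebra_simps)
    qed
  qed
qed



lemma is_face_iff: "is_face (polP :: (real^'n) set) F \<longleftrightarrow> F \<noteq> {} \<and> F face_of polP"
proof
  assume "is_face polP F"
  thus "F \<noteq> {} \<and> F face_of polP"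
    unfolding is_face_def
    using face_of_refl[OF convex_polP] face_of_Int_supporting_hyperplane_le[OF convex_polP] by blast
next
  assume a: "F \<noteq> {} \<and> F face_of polP"
  hence "F exposed_face_of polP" using exposed_face_of_polyhedron[OF polyhedron_polP] by blast
  then obtain a b where "polP \<subseteq> {x. a \<bullet> x \<le> b}" "F = polP \<inter> {x. a \<bullet> x = b}"
    unfolding exposed_face_of_def by blast
  thus "is_face polP F" using a unfolding is_face_def by blast
qed

lemma pof_iff: "proper_open_face (G :: (real^'n) set) \<longleftrightarrow>
   (\<exists>F. F face_of polP \<and> F \<noteq> {} \<and> F \<noteq> polP \<and> G = rel_interior F)"
  unfolding proper_open_face_def is_face_iff by blast

lemma relint_polP: "rel_interior (polP :: (real^'n) set) = interior polP"
proof -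
  have "(0::real^'n) \<in> interior polP" by (simp add: interior_polP normP_def)
  thus ?thesis by (intro rel_interior_nonempty_interior) auto
qed

lemma min_face:
  assumes "convex C" "C \<noteq> {}" "C \<subseteq> (polP :: (real^'n) set)"
  shows "\<exists>H. H face_of polP \<and> H \<noteq> {} \<and> rel_interior C \<subseteq> rel_interior H"
proof -
  define H where "H = \<Inter>{H. H face_of polP \<and> C \<subseteq> H}"
  have fam: "{H. H face_of polP \<and> C \<subseteq> H} \<noteq> {}"
    using face_of_refl[OF convex_polP] assms(3) by blast
  have Hf: "H face_of polP" unfolding H_def by (rule face_of_Inter[OF fam]) blast
  have CH: "C \<subseteq> H" unfolding H_def by blast
  have polyH: "polyhedron H" using face_of_polyhedron_polyhedron[OF polyhedron_polP Hf] .
  have "rel_interior C \<subseteq> rel_interior H"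
  proof
    fix y assume y: "y \<in> rel_interior C"
    show "y \<in> rel_interior H"
    proof (rule ccontr)
      assume "y \<notin> rel_interior H"
      moreover have "y \<in> H" using y CH rel_interior_subset by blast
      ultimately have "y \<in> \<Union>{F. F facet_of H}" using rel_boundary_of_polyhedron[OF polyH] by blast
      then obtain K where K: "K facet_of H" "y \<in> K" by blast
      have KH: "K face_of H" using K(1) facet_of_imp_face_of by blast
      have "C \<subseteq> K" using subset_of_face_of[OF KH CH] y K(2) by blast
      moreover have "K face_of polP" using face_of_trans[OF KH Hf] .
      ultimately have "H \<subseteq> K" unfolding H_def by blast
      hence "K = H" using facet_of_imp_subset[OF K(1)] by blast
      thus False using K(1) by simp
    qed
  qed
  thus ?thesis using Hf CH assms(2) by blast
qed

lemma pof_neg: "proper_open_face (G :: (real^'n) set) \<Longrightarrow> proper_open_face (uminus ` G)"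
proof -
  assume "proper_open_face G"
  then obtain F where F: "F face_of polP" "F \<noteq> {}" "F \<noteq> polP" "G = rel_interior F"
    unfolding pof_iff by blast
  have up: "uminus ` (polP :: (real^'n) set) = polP"
    by (force simp: polP_def nP_uminus image_iff intro: exI[of _ "- _"])
  have lin: "linear (uminus :: real^'n \<Rightarrow> _)" by (simp add: linear_uminus)
  have "(uminus ` F) face_of polP" using face_of_linear_image[OF lin, of F polP] F(1) up inj_uminus
    by simp
  moreover have "uminus ` F \<noteq> polP"
  proof
    assume "uminus ` F = polP"
    hence "uminus ` uminus ` F = uminus ` polP" by simp
    hence "F = polP" using up by (simp add: image_image)
    thus False using F(3) by simp
  qed
  moreover have "rel_interior (uminus ` F) = uminus ` G"
    using rel_interior_injective_linear_image[of uminus F] F(4) bounded_linear_minus[OF bounded_linear_ident]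
    by (simp add: inj_uminus)
  ultimately show ?thesis unfolding pof_iff using F(2) by blast
qed

lemma pof_nonempty: "proper_open_face (G :: (real^'n) set) \<Longrightarrow> G \<noteq> {}"
  unfolding pof_iff using rel_interior_eq_empty face_of_imp_convex by blast

lemma pof_boundary: "proper_open_face (G :: (real^'n) set) \<Longrightarrow> x \<in> G \<Longrightarrow> normP x = 1"
proof -
  assume "proper_open_face G" "x \<in> G"
  then obtain F where F: "F face_of polP" "F \<noteq> {}" "F \<noteq> polP" "x \<in> rel_interior F"
    unfolding pof_iff by blast
  have "x \<in> F" using F(4) rel_interior_subset by blast
  hence "x \<in> polP" "x \<notin> interior polP"
    using face_of_imp_subset[OF F(1)] face_of_disjoint_interior[OF F(1) F(3)] by blast+
  have "normP x \<le> 1" using \<open>x \<in> polP\<close> by (simp add: polP_def)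
  moreover have "\<not> normP x < 1" using \<open>x \<notin> interior polP\<close> interior_polP by auto
  ultimately show ?thesis by simp
qed

lemma boundary_face: "normP (x::real^'n) = 1 \<Longrightarrow> \<exists>G. proper_open_face G \<and> x \<in> G"
proof -
  assume x: "normP x = 1"
  obtain H where H: "H face_of polP" "H \<noteq> {}" "rel_interior {x} \<subseteq> rel_interior H"
    using min_face[of "{x}"] x by (auto simp: polP_def)
  have "H \<noteq> polP"
  proof
    assume "H = polP"
    hence "x \<in> interior polP" using H(3) relint_polP by (metis rel_interior_sing singletonI subsetD)
    thus False using x interior_polP by (metis mem_Collect_eq order_less_irrefl)
  qed
  thus ?thesis using H unfolding pof_iff by auto
qed

lemma L_image:
  fixes M :: "real^'n^'n"
  assumes G: "proper_open_face G" and M: "\<forall>x. normP (M *v x) \<le> normP x"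
  shows "(\<lambda>x. M *v x) ` G \<subseteq> interior polP \<or> (\<exists>H. proper_open_face H \<and> (\<lambda>x. M *v x) ` G \<subseteq> H)"
proof -
  obtain F where F: "F face_of polP" "F \<noteq> {}" "F \<noteq> polP" "G = rel_interior F"
    using G unfolding pof_iff by blast
  have cF: "convex F" using F(1) face_of_imp_convex by blast
  let ?C = "(\<lambda>x. M *v x) ` F"
  have cC: "convex ?C" using cF by (intro convex_linear_image) simp
  have sub: "?C \<subseteq> polP" using face_of_imp_subset[OF F(1)] M
    by (auto simp: polP_def intro: order_trans)
  obtain H where H: "H face_of polP" "H \<noteq> {}" "rel_interior ?C \<subseteq> rel_interior H"
    using min_face[OF cC _ sub] F(2) by blast
  have img: "(\<lambda>x. M *v x) ` G = rel_interior ?C"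
    using rel_interior_convex_linear_image[OF _ cF, of "\<lambda>x. M *v x"] F(4) by simp
  show ?thesis
  proof (cases "H = polP")
    case True thus ?thesis using H(3) img relint_polP by auto
  next
    case False thus ?thesis using H img unfolding pof_iff by blast
  qed
qed

lemma pof_finite: "finite {G :: (real^'n) set. proper_open_face G}"
proof -
  have "{G :: (real^'n) set. proper_open_face G} \<subseteq> rel_interior ` {F. F face_of polP}"
    unfolding pof_iff by blast
  thus ?thesis using finite_polyhedron_faces[OF polyhedron_polP] finite_subset by blast
qed



fun app :: "(nat \<Rightarrow> real^'n^'n) \<Rightarrow> nat list \<Rightarrow> real^'n \<Rightarrow> real^'n" where
  "app A [] x = x"
| "app A (i # w) x = app A w (A i *v x)"

lemma app_append: "app A (v @ w) x = app A w (app A v x)"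
  by (induction v arbitrary: x) auto

lemma app_neg: "app A w (- x) = - app A w x"
  by (induction w arbitrary: x) (auto simp: linear_neg)

lemma app_cont: "continuous_on UNIV (app A w)"
proof (induction w)
  case Nil thus ?case by (simp add: continuous_on_id')
next
  case (Cons i w)
  have "continuous_on UNIV (\<lambda>x. app A w (A i *v x))"
    by (rule continuous_on_compose2[OF Cons]) (auto intro: linear_continuous_on)
  thus ?case by simp
qed

lemma app_nonexp:
  assumes nx: "\<forall>i\<in>{1..m}. \<forall>x. normP (A i *v x) \<le> normP x"
  shows "set w \<subseteq> {1..m} \<Longrightarrow> normP (app A w x) \<le> normP x"
proof (induction w arbitrary: x)
  case (Cons i w)
  hence "normP (app A w (A i *v x)) \<le> normP (A i *v x)" by simp
  also have "\<dots> \<le> normP x" using nx Cons.prems by simp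
  finally show ?case by simp
qed simp

lemma app_lin:
  assumes one: "\<forall>i\<in>{1..m}. A i *v (vec 1) = vec 1"
  shows "set w \<subseteq> {1..m} \<Longrightarrow> app A w (c *\<^sub>R x + d *\<^sub>R vec 1) = c *\<^sub>R app A w x + d *\<^sub>R vec 1"
proof (induction w arbitrary: x)
  case (Cons i w)
  have "A i *v (c *\<^sub>R x + d *\<^sub>R vec 1) = c *\<^sub>R (A i *v x) + d *\<^sub>R vec 1"
    using one Cons.prems by (simp add: matrix_vector_right_distrib matrix_vector_mult_scaleR)
  thus ?case using Cons by simp
qed simp

lemma word_faces:
  assumes nx: "\<forall>i\<in>{1..m}. \<forall>x. normP (A i *v x) \<le> normP x"
  shows "set w \<subseteq> {1..m} \<Longrightarrow> proper_open_face G \<Longrightarrow>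
     app A w ` G \<subseteq> interior polP \<or> (\<exists>H. proper_open_face H \<and> app A w ` G \<subseteq> H)"
proof (induction w arbitrary: G)
  case Nil thus ?case by auto
next
  case (Cons i w)
  have "(\<lambda>x. A i *v x) ` G \<subseteq> interior polP \<or> (\<exists>H. proper_open_face H \<and> (\<lambda>x. A i *v x) ` G \<subseteq> H)"
    using L_image[OF Cons.prems(2)] nx Cons.prems(1) by simp
  thus ?case
  proof
    assume a: "(\<lambda>x. A i *v x) ` G \<subseteq> interior polP"
    have "app A (i # w) ` G \<subseteq> interior polP"
    proof
      fix y assume "y \<in> app A (i # w) ` G"
      then obtain x where x: "x \<in> G" "y = app A w (A i *v x)" by auto
      have "normP (A i *v x) < 1" using a x(1) interior_polP by blast
      moreover have "normP y \<le> normP (A i *v x)" using x(2) app_nonexp[OF nx] Cons.prems(1) by simp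
      ultimately have "normP y < 1" by linarith
      thus "y \<in> interior polP" using interior_polP by (metis (mono_tags) mem_Collect_eq)
    qed
    thus ?case by blast
  next
    assume "\<exists>H. proper_open_face H \<and> (\<lambda>x. A i *v x) ` G \<subseteq> H"
    then obtain H where H: "proper_open_face H" "(\<lambda>x. A i *v x) ` G \<subseteq> H" by blast
    have "app A w ` H \<subseteq> interior polP \<or> (\<exists>H'. proper_open_face H' \<and> app A w ` H \<subseteq> H')"
      using Cons.IH[OF _ H(1)] Cons.prems(1) by simp
    moreover have "app A (i # w) ` G \<subseteq> app A w ` H" using H(2) by auto
    ultimately show ?case by blast
  qed
qed

lemma mem_neg: "(x::'a::group_add) \<in> uminus ` G \<longleftrightarrow> - x \<in> G"
proof
  assume "x \<in> uminus ` G" then obtain g where "g \<in> G" "x = - g" by blast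
  thus "- x \<in> G" by simp
next
  assume "- x \<in> G" hence "- (- x) \<in> uminus ` G" by (rule imageI)
  thus "x \<in> uminus ` G" by simp
qed

lemma pm_cases: "FF = {G, uminus ` G} \<Longrightarrow> F \<in> FF \<Longrightarrow> (x::'a::group_add) \<in> \<Union>FF \<Longrightarrow> x \<in> F \<or> - x \<in> F"
proof -
  assume a: "FF = {G, uminus ` G}" "F \<in> FF" "x \<in> \<Union>FF"
  hence x: "x \<in> G \<or> - x \<in> G" using mem_neg[of x G] by auto
  from a have "F = G \<or> F = uminus ` G" by auto
  thus ?thesis
  proof
    assume "F = uminus ` G"
    moreover have "x \<in> G \<Longrightarrow> - x \<in> uminus ` G" by (rule imageI)
    moreover have "- x \<in> G \<Longrightarrow> x \<in> uminus ` G" using mem_neg[of x G] by simp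
    ultimately show ?thesis using x by blast
  qed (use x in blast)
qed

lemma neg_neg_img: "uminus ` uminus ` (H::'a::group_add set) = H"
  by (simp add: image_image)

lemma pm_union: "GG = {H, uminus ` H} \<Longrightarrow> G \<in> GG \<Longrightarrow> pmset (G::(real^'n) set) = \<Union>GG"
  unfolding pmset_def using neg_neg_img[of H] by auto

lemma path_word:
  assumes nx: "\<forall>i\<in>{1..m}. \<forall>x. normP (A i *v x) \<le> normP x"
  assumes p: "(face_edge (A ` {1..m}))\<^sup>*\<^sup>* N None"
  shows "\<forall>FF. N = Some FF \<longrightarrow> (\<exists>w. set w \<subseteq> {1..m} \<and> (\<forall>x\<in>\<Union>FF. normP (app A w x) < 1))"
  using p
proof (induction rule: converse_rtranclp_induct)
  case base thus ?case by simp
next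
  case (step y z)
  show ?case
  proof (intro allI impI)
    fix FF assume y: "y = Some FF"
    have e: "face_edge (A ` {1..m}) (Some FF) z" using step(1) y by simp
    then obtain G where G: "proper_open_face G" "FF = {G, uminus ` G}"
      unfolding face_edge_def face_node_def by auto
    show "\<exists>w. set w \<subseteq> {1..m} \<and> (\<forall>x\<in>\<Union>FF. normP (app A w x) < 1)"
    proof (cases z)
      case None
      with e obtain F i where Fi: "F \<in> FF" "i \<in> {1..m}" "(\<lambda>x. A i *v x) ` F \<subseteq> interior polP"
        unfolding face_edge_def by auto
      have "\<forall>x\<in>\<Union>FF. normP (app A [i] x) < 1"
      proof
        fix x assume x: "x \<in> \<Union>FF"
        from pm_cases[OF G(2) Fi(1) x] show "normP (app A [i] x) < 1"
        proof
          assume "x \<in> F" thus ?thesis using Fi(3) interior_polP by auto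
        next
          assume "- x \<in> F"
          hence "normP (A i *v (- x)) < 1" using Fi(3) interior_polP by auto
          thus ?thesis by (simp add: linear_neg nP_uminus)
        qed
      qed
      thus ?thesis using Fi(2) by (intro exI[of _ "[i]"]) auto
    next
      case (Some GG)
      with e obtain F G' i where Fi: "F \<in> FF" "G' \<in> GG" "i \<in> {1..m}"
        "(\<lambda>x. A i *v x) ` F \<subseteq> pmset G'"
        unfolding face_edge_def by auto
      from e Some obtain H where H: "proper_open_face H" "GG = {H, uminus ` H}"
        unfolding face_edge_def face_node_def by auto
      obtain w where w: "set w \<subseteq> {1..m}" "\<forall>x\<in>\<Union>GG. normP (app A w x) < 1"
        using step(3) Some by blast
      have pu: "pmset G' = \<Union>GG" using pm_union[OF H(2) Fi(2)] .
      have "\<forall>x\<in>\<Union>FF. normP (app A (i # w) x) < 1"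
      proof
        fix x assume x: "x \<in> \<Union>FF"
        have "A i *v x \<in> \<Union>GG"
        proof -
          from pm_cases[OF G(2) Fi(1) x] show ?thesis
          proof
            assume "x \<in> F" thus ?thesis using Fi(4) pu by auto
          next
            assume "- x \<in> F"
            hence "A i *v (- x) \<in> pmset G'" using Fi(4) by auto
            hence "- (A i *v x) \<in> pmset G'" by (simp add: linear_neg)
            hence "A i *v x \<in> pmset G'" unfolding pmset_def
              by (auto simp: image_iff) (metis minus_minus)+
            thus ?thesis using pu by simp
          qed
        qed
        thus "normP (app A (i # w) x) < 1" using w(2) by (metis UnionE app.simps(2))
      qed
      thus ?thesis using w(1) Fi(3) by (intro exI[of _ "i # w"]) auto
    qed
  qed
qed

lemma combine:
  assumes nx: "\<forall>i\<in>{1..m}. \<forall>x. normP (A i *v x) \<le> normP x"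
  assumes all: "\<And>G. proper_open_face G \<Longrightarrow> \<exists>w. set w \<subseteq> {1..m} \<and> (\<forall>x\<in>G. normP (app A w x) < 1)"
  shows "finite GS \<Longrightarrow> GS \<subseteq> {G. proper_open_face G} \<Longrightarrow>
     \<exists>w. set w \<subseteq> {1..m} \<and> (\<forall>G\<in>GS. \<forall>x\<in>G. normP (app A w x) < 1)"
proof (induction GS rule: finite_induct)
  case empty thus ?case by (intro exI[of _ "[]"]) simp
next
  case (insert G GS)
  then obtain w where w: "set w \<subseteq> {1..m}" "\<forall>G\<in>GS. \<forall>x\<in>G. normP (app A w x) < 1" by auto
  have G: "proper_open_face G" using insert.prems by auto
  from word_faces[OF nx w(1) G] show ?case
  proof
    assume "app A w ` G \<subseteq> interior polP"
    hence "\<forall>x\<in>G. normP (app A w x) < 1" using interior_polP by auto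
    thus ?thesis using w by auto
  next
    assume "\<exists>H. proper_open_face H \<and> app A w ` G \<subseteq> H"
    then obtain H where H: "proper_open_face H" "app A w ` G \<subseteq> H" by blast
    obtain v where v: "set v \<subseteq> {1..m}" "\<forall>x\<in>H. normP (app A v x) < 1" using all[OF H(1)] by blast
    have "\<forall>G'\<in>insert G GS. \<forall>x\<in>G'. normP (app A (w @ v) x) < 1"
    proof (intro ballI)
      fix G' x assume G': "G' \<in> insert G GS" "x \<in> G'"
      show "normP (app A (w @ v) x) < 1"
      proof (cases "G' = G")
        case True thus ?thesis using G' H(2) v(2) by (auto simp: app_append)
      next
        case False
        hence "normP (app A w x) < 1" using G' w(2) by auto
        thus ?thesis using app_nonexp[OF nx v(1)] by (simp add: app_append) (meson le_less_trans)
      qed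
    qed
    thus ?thesis using w(1) v(1) by (intro exI[of _ "w @ v"]) auto
  qed
qed



lemma traj_shift: "traj A \<sigma> x0 (s + t) = traj A (\<lambda>k. \<sigma> (s + k)) (traj A \<sigma> x0 s) t"
  by (induction t) auto

lemma traj_take: "j \<le> length W \<Longrightarrow> (\<forall>k<length W. \<sigma> k = W ! k) \<Longrightarrow> traj A \<sigma> x0 j = app A (take j W) x0"
proof (induction j)
  case (Suc j)
  hence "traj A \<sigma> x0 (Suc j) = A (W ! j) *v app A (take j W) x0" by simp
  also have "\<dots> = app A (take (Suc j) W) x0"
    using Suc.prems by (simp add: take_Suc_conv_app_nth app_append)
  finally show ?case .
qed simp

lemma traj_nonexp:
  assumes nx: "\<forall>i\<in>{1..m}. \<forall>x. normP (A i *v x) \<le> normP x" and s: "\<forall>t. \<sigma> t \<in> {1..m}"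
  shows "normP (traj A \<sigma> x0 t) \<le> normP x0"
proof (induction t)
  case (Suc t) thus ?case using nx s by (simp, meson order_trans)
qed simp

lemma contraction:
  fixes A :: "nat \<Rightarrow> real^'n^'n"
  assumes one: "\<forall>i\<in>{1..m}. A i *v (vec 1) = vec 1"
    and nx: "\<forall>i\<in>{1..m}. \<forall>x. normP (A i *v x) \<le> normP x"
    and W: "set W \<subseteq> {1..m}" and bd: "\<forall>x. normP x = 1 \<longrightarrow> normP (app A W x) < 1"
    and e: "normP (e::real^'n) = 1" "e $ i0 = 0"
  shows "\<exists>\<gamma>. 0 \<le> \<gamma> \<and> \<gamma> < 1 \<and> (\<forall>x. normP (app A W x) \<le> \<gamma> * normP x)"
proof -
  define K where "K = {x::real^'n. normP x = 1} \<inter> {x. axis i0 1 \<bullet> x = 0}"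
  have ax: "\<And>x::real^'n. axis i0 1 \<bullet> x = x $ i0" by (simp add: inner_axis inner_axis' inner_commute)
  have "closed K" unfolding K_def
    by (intro closed_Int closed_Collect_eq nP_cont continuous_on_const closed_hyperplane)
  moreover have "bounded K"
  proof -
    have "norm x \<le> real CARD('n) * 2" if "x \<in> K" for x
    proof -
      have "\<bar>x $ i\<bar> \<le> 2" for i
        using that nP_le[of x i i0] nP_le[of x i0 i] unfolding K_def ax by auto
      hence "(\<Sum>i\<in>UNIV. \<bar>x $ i\<bar>) \<le> real (card (UNIV::'n set)) * 2"
        by (intro sum_bounded_above) auto
      thus ?thesis using norm_le_l1_cart[of x] by linarith
    qed
    thus ?thesis unfolding bounded_iff by blast
  qed
  ultimately have cK: "compact K" by (simp add: compact_eq_bounded_closed)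
  have eK: "e \<in> K" using e unfolding K_def ax by simp
  have cf: "continuous_on K (\<lambda>x. normP (app A W x))"
    by (rule continuous_on_compose2[OF nP_cont continuous_on_subset[OF app_cont]]) auto
  obtain xm where xm: "xm \<in> K" "\<forall>y\<in>K. normP (app A W y) \<le> normP (app A W xm)"
    using continuous_attains_sup[OF cK _ cf] eK by blast
  define \<gamma> where "\<gamma> = normP (app A W xm)"
  have g1: "\<gamma> < 1" using bd xm(1) unfolding K_def \<gamma>_def by auto
  have g0: "0 \<le> \<gamma>" unfolding \<gamma>_def by (rule nP_nonneg)
  have "normP (app A W x) \<le> \<gamma> * normP x" for x
  proof (cases "normP x = 0")
    case True
    hence "x = 0 *\<^sub>R x + (x $ i0) *\<^sub>R vec 1" using nP_zero[of x i0] by simp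
    hence "app A W x = 0 *\<^sub>R app A W x + (x $ i0) *\<^sub>R vec 1"
      using app_lin[OF one W, of 0 x "x $ i0"] by metis
    hence "normP (app A W x) = 0" using nP_const by (metis add_0 scale_zero_left)
    thus ?thesis using True by simp
  next
    case False
    define n where "n = normP x"
    have n: "n > 0" using False nP_nonneg[of x] unfolding n_def by linarith
    define y where "y = (1/n) *\<^sub>R x + (- (x $ i0) / n) *\<^sub>R vec 1"
    have "y = (1/n) *\<^sub>R (x - (x $ i0) *\<^sub>R vec 1)" unfolding y_def by (simp add: algebra_simps)
    hence "normP y = (1/n) * normP (x - (x $ i0) *\<^sub>R vec 1)"
      using nP_scale[of "1/n" "x - (x $ i0) *\<^sub>R vec 1"] n by simp
    also have "\<dots> = 1" using nP_diff_const[of x "x $ i0"] n unfolding n_def by simp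
    finally have ny: "normP y = 1" .
    have "y $ i0 = 0" unfolding y_def using n by (simp add: field_simps)
    hence "y \<in> K" using ny unfolding K_def ax by simp
    hence le: "normP (app A W y) \<le> \<gamma>" using xm(2) unfolding \<gamma>_def by blast
    have "app A W y = (1/n) *\<^sub>R app A W x + (- (x $ i0) / n) *\<^sub>R vec 1"
      unfolding y_def by (rule app_lin[OF one W])
    hence "normP (app A W y) = normP ((1/n) *\<^sub>R app A W x)"
      using nP_add_const[of "(1/n) *\<^sub>R app A W x" "- (x $ i0) / n"] by simp
    also have "\<dots> = (1/n) * normP (app A W x)" using nP_scale[of "1/n"] n by simp
    finally have "normP (app A W y) = (1/n) * normP (app A W x)" .
    with le have "(1/n) * normP (app A W x) \<le> \<gamma>" by simp
    hence "normP (app A W x) \<le> \<gamma> * n" using n by (simp add: field_simps)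
    thus ?thesis unfolding n_def .
  qed
  thus ?thesis using g0 g1 by blast
qed



lemma step_bound:
  fixes A :: "nat \<Rightarrow> real^'n^'n"
  assumes one: "\<forall>i\<in>{1..m}. A i *v (vec 1) = vec 1"
  shows "\<exists>C\<ge>0. \<forall>i\<in>{1..m}. \<forall>y. norm (A i *v y - y) \<le> C * normP y"
proof -
  have "\<forall>i. \<exists>K>0. \<forall>z. norm (A i *v z) \<le> norm z * K"
    using bounded_linear.pos_bounded[OF matrix_vector_mul_bounded_linear] by blast
  then obtain Bm where Bm: "\<And>i. Bm i > 0" "\<And>i z. norm (A i *v z) \<le> norm z * Bm i" by metis
  define Cb where "Cb = (\<Sum>i\<in>{1..m}. Bm i)"
  have Cb: "\<And>i. i \<in> {1..m} \<Longrightarrow> Bm i \<le> Cb"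
    unfolding Cb_def by (rule member_le_sum) (auto intro: less_imp_le Bm(1))
  have Cb0: "Cb \<ge> 0" unfolding Cb_def by (intro sum_nonneg) (auto intro: less_imp_le Bm(1))
  define C where "C = (Cb + 1) * (real CARD('n) * 2)"
  have "norm (A i *v y - y) \<le> C * normP y" if i: "i \<in> {1..m}" for i y
  proof -
    define z where "z = y - (y $ undefined) *\<^sub>R vec 1"
    have "A i *v y - y = A i *v z - z" unfolding z_def using one i
      by (simp add: matrix_vector_mult_diff_distrib matrix_vector_mult_scaleR)
    also have "norm \<dots> \<le> norm (A i *v z) + norm z" by (rule norm_triangle_ineq4)
    also have "\<dots> \<le> norm z * Bm i + norm z" using Bm(2) by simp
    also have "\<dots> \<le> (Cb + 1) * norm z" using Cb[OF i] by (simp add: algebra_simps mult_right_mono)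
    also have "norm z \<le> real CARD('n) * 2 * normP y"
    proof -
      have "\<bar>z $ k\<bar> \<le> 2 * normP y" for k
        unfolding z_def using nP_le[of y k undefined] nP_le[of y undefined k] by auto
      hence "(\<Sum>k\<in>UNIV. \<bar>z $ k\<bar>) \<le> real (card (UNIV::'n set)) * (2 * normP y)"
        by (intro sum_bounded_above) auto
      thus ?thesis using norm_le_l1_cart[of z] by simp
    qed
    hence "(Cb + 1) * norm z \<le> (Cb + 1) * (real CARD('n) * 2 * normP y)"
      by (rule mult_left_mono) (use Cb0 in auto)
    finally show ?thesis unfolding C_def by simp
  qed
  moreover have "C \<ge> 0" unfolding C_def using Cb0 by simp
  ultimately show ?thesis by blast
qed

lemma rho_bound:
  fixes \<rho> \<gamma> \<gamma>' :: real
  assumes L: "0 < L" and rho: "0 < \<rho>" "\<rho> < 1" "\<rho> ^ L = \<gamma>'" and g: "\<gamma> \<le> \<gamma>'" "0 \<le> \<gamma>"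
  shows "\<gamma> ^ (t div L) \<le> \<rho> ^ t / \<rho> ^ L"
proof -
  have a2: "\<gamma> ^ (t div L) \<le> \<gamma>' ^ (t div L)" by (rule power_mono[OF g(1) g(2)])
  have a3: "\<gamma>' ^ (t div L) = \<rho> ^ (L * (t div L))" by (simp only: power_mult rho(3))
  have "t \<le> L * (t div L) + L"
    using mod_less_divisor[OF L, of t] mult_div_mod_eq[of L t] by linarith
  hence "\<rho> ^ (L * (t div L) + L) \<le> \<rho> ^ t" by (rule power_decreasing) (use rho(1,2) in auto)
  hence "\<rho> ^ (L * (t div L)) * \<rho> ^ L \<le> \<rho> ^ t" by (simp only: power_add)
  moreover have "\<rho> ^ L > 0" using rho(1) by simp
  ultimately have a4: "\<rho> ^ (L * (t div L)) \<le> \<rho> ^ t / \<rho> ^ L" using pos_le_divide_eq by blast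
  show ?thesis using a2 a3 a4 by linarith
qed

lemma conv_from_word:
  fixes A :: "nat \<Rightarrow> real^'n^'n"
  assumes one: "\<forall>i\<in>{1..m}. A i *v (vec 1) = vec 1"
    and nx: "\<forall>i\<in>{1..m}. \<forall>x. normP (A i *v x) \<le> normP x"
    and W: "set W \<subseteq> {1..m}" "W \<noteq> []"
    and g: "0 \<le> \<gamma>" "\<gamma> < 1" "\<forall>x. normP (app A W x) \<le> \<gamma> * normP x"
  shows "\<exists>\<sigma>. (\<forall>t. \<sigma> t \<in> {1..m}) \<and> (\<forall>x0. \<exists>c::real. traj A \<sigma> x0 \<longlonglongrightarrow> c *\<^sub>R vec 1)"
proof -
  define L where "L = length W"
  have L: "L > 0" using W(2) unfolding L_def by simp
  define \<sigma> where "\<sigma> t = W ! (t mod L)" for t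
  have sig: "\<forall>t. \<sigma> t \<in> {1..m}" unfolding \<sigma>_def L_def using W L L_def
    by (meson mod_less_divisor nth_mem subsetD)
  have per: "(\<lambda>k. \<sigma> (L + k)) = \<sigma>" unfolding \<sigma>_def by simp
  have tL: "traj A \<sigma> x0 L = app A W x0" for x0
    using traj_take[of L W \<sigma> A x0] unfolding L_def \<sigma>_def by simp
  have shift: "traj A \<sigma> x0 (L + t) = traj A \<sigma> (app A W x0) t" for x0 t
    using traj_shift[of A \<sigma> x0 L t] per tL by simp
  have blk: "normP (traj A \<sigma> x0 (k * L + j)) \<le> \<gamma> ^ k * normP x0" for k j x0
  proof (induction k arbitrary: x0)
    case 0 thus ?case using traj_nonexp[OF nx sig] by simp
  next
    case (Suc k)
    have "traj A \<sigma> x0 (Suc k * L + j) = traj A \<sigma> (app A W x0) (k * L + j)"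
      using shift[of x0 "k * L + j"] by (simp add: add.assoc)
    hence "normP (traj A \<sigma> x0 (Suc k * L + j)) \<le> \<gamma> ^ k * normP (app A W x0)" using Suc by simp
    also have "\<dots> \<le> \<gamma> ^ k * (\<gamma> * normP x0)" by (rule mult_left_mono[OF g(3)[rule_format]]) (simp add: g(1))
    finally show ?case by (simp add: algebra_simps)
  qed
  define \<gamma>' where "\<gamma>' = max \<gamma> (1/2)"
  define \<rho> where "\<rho> = root L \<gamma>'"
  have g': "0 < \<gamma>'" "\<gamma>' < 1" "\<gamma> \<le> \<gamma>'" using g unfolding \<gamma>'_def by auto
  have rho: "0 < \<rho>" "\<rho> < 1" "\<rho> ^ L = \<gamma>'"
    unfolding \<rho>_def using g' L by (auto simp: real_root_lt_1_iff real_root_pow_pos)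
  have tb: "normP (traj A \<sigma> x0 t) \<le> \<rho> ^ t / \<rho> ^ L * normP x0" for x0 t
  proof -
    have "normP (traj A \<sigma> x0 (t div L * L + t mod L)) \<le> \<gamma> ^ (t div L) * normP x0" by (rule blk)
    hence a1: "normP (traj A \<sigma> x0 t) \<le> \<gamma> ^ (t div L) * normP x0" by (simp only: div_mult_mod_eq)
    have "\<gamma> ^ (t div L) \<le> \<rho> ^ t / \<rho> ^ L" by (rule rho_bound[OF L rho g'(3) g(1)])
    hence "\<gamma> ^ (t div L) * normP x0 \<le> \<rho> ^ t / \<rho> ^ L * normP x0"
      by (rule mult_right_mono[OF _ nP_nonneg])
    thus ?thesis using a1 by linarith
  qed
  obtain C where C: "C \<ge> 0" "\<forall>i\<in>{1..m}. \<forall>y. norm (A i *v y - y) \<le> C * normP y"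
    using step_bound[OF one] by blast
  have "\<exists>c::real. traj A \<sigma> x0 \<longlonglongrightarrow> c *\<^sub>R vec 1" for x0
  proof -
    define d where "d t = traj A \<sigma> x0 (Suc t) - traj A \<sigma> x0 t" for t
    define K where "K = C * normP x0 / \<rho> ^ L"
    have dn: "norm (d t) \<le> K * \<rho> ^ t" for t
    proof -
      have "norm (d t) \<le> C * normP (traj A \<sigma> x0 t)" unfolding d_def using C(2) sig by simp
      also have "\<dots> \<le> C * (\<rho> ^ t / \<rho> ^ L * normP x0)" by (rule mult_left_mono[OF tb C(1)])
      also have "\<dots> = K * \<rho> ^ t" unfolding K_def by (simp add: field_simps)
      finally show ?thesis .
    qed
    have "summable (\<lambda>t. K * \<rho> ^ t)" using rho by (intro summable_mult summable_geometric) simp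
    hence sd: "summable d" by (rule summable_comparison_test'[of _ 0]) (use dn in auto)
    have tel: "traj A \<sigma> x0 t = x0 + (\<Sum>k<t. d k)" for t
      unfolding d_def sum_lessThan_telescope by simp
    define l where "l = x0 + suminf d"
    have lim: "traj A \<sigma> x0 \<longlonglongrightarrow> l"
      unfolding tel l_def by (intro tendsto_add tendsto_const summable_LIMSEQ sd)
    have n0: "(\<lambda>t. normP (traj A \<sigma> x0 t)) \<longlonglongrightarrow> 0"
    proof (rule Lim_null_comparison)
      show "\<forall>\<^sub>F t in sequentially. norm (normP (traj A \<sigma> x0 t)) \<le> \<rho> ^ t / \<rho> ^ L * normP x0"
      proof (rule always_eventually, rule allI)
        fix t
        have "normP (traj A \<sigma> x0 t) \<ge> 0" by (rule nP_nonneg)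
        thus "norm (normP (traj A \<sigma> x0 t)) \<le> \<rho> ^ t / \<rho> ^ L * normP x0" using tb[of x0 t] by simp
      qed
      have "(\<lambda>t. \<rho> ^ t) \<longlonglongrightarrow> 0" by (rule LIMSEQ_power_zero) (use rho in simp)
      thus "(\<lambda>t. \<rho> ^ t / \<rho> ^ L * normP x0) \<longlonglongrightarrow> 0"
        by (intro tendsto_mult_left_zero tendsto_divide_zero)
    qed
    have "isCont normP l" using nP_cont[where 'n='n] by (simp add: continuous_on_eq_continuous_at)
    hence "(\<lambda>t. normP (traj A \<sigma> x0 t)) \<longlonglongrightarrow> normP l"
      using lim by (rule isCont_tendsto_compose)
    hence "normP l = 0" using n0 LIMSEQ_unique by blast
    hence "l = (l $ undefined) *\<^sub>R vec 1" by (rule nP_zero)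
    thus ?thesis using lim by metis
  qed
  thus ?thesis using sig by blast
qed



theorem theorem1:
  fixes A :: "nat \<Rightarrow> real^'n^'n" and m :: nat
  assumes "CARD('n) \<ge> 2"
    and "\<forall>i\<in>{1..m}. A i *v (vec 1) = vec 1"
    and "\<forall>i\<in>{1..m}. \<forall>x. normP (A i *v x) \<le> normP x"
  shows "(\<exists>\<sigma>. (\<forall>t. \<sigma> t \<in> {1..m}) \<and>
            (\<forall>x0. \<exists>c::real. traj A \<sigma> x0 \<longlonglongrightarrow> c *\<^sub>R vec 1))
         \<longleftrightarrow>
         (\<forall>F. proper_open_face F \<longrightarrow>
            (face_edge (A ` {1..m}))\<^sup>*\<^sup>* (Some {F, uminus ` F}) None)"
proof
  assume "\<exists>\<sigma>. (\<forall>t. \<sigma> t \<in> {1..m}) \<and> (\<forall>x0. \<exists>c::real. traj A \<sigma> x0 \<longlonglongrightarrow> c *\<^sub>R vec 1)"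
  then obtain \<sigma> where sig: "\<forall>t. \<sigma> t \<in> {1..m}"
    and conv: "\<forall>x0. \<exists>c::real. traj A \<sigma> x0 \<longlonglongrightarrow> c *\<^sub>R vec 1" by blast
  show "\<forall>F. proper_open_face F \<longrightarrow> (face_edge (A ` {1..m}))\<^sup>*\<^sup>* (Some {F, uminus ` F}) None"
  proof (intro allI impI)
    fix F :: "(real^'n) set" assume F: "proper_open_face F"
    show "(face_edge (A ` {1..m}))\<^sup>*\<^sup>* (Some {F, uminus ` F}) None"
    proof (rule ccontr)
      assume np: "\<not> (face_edge (A ` {1..m}))\<^sup>*\<^sup>* (Some {F, uminus ` F}) None"
      obtain x0 where x0: "x0 \<in> F" using pof_nonempty[OF F] by blast
      have inv: "\<exists>G. proper_open_face G \<and> (face_edge (A ` {1..m}))\<^sup>*\<^sup>* (Some {F, uminus ` F}) (Some {G, uminus ` G})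
                 \<and> (traj A \<sigma> x0 t \<in> G \<or> - traj A \<sigma> x0 t \<in> G)" for t
      proof (induction t)
        case 0 show ?case using F x0 by auto
      next
        case (Suc t)
        then obtain G where G: "proper_open_face G"
          and pth: "(face_edge (A ` {1..m}))\<^sup>*\<^sup>* (Some {F, uminus ` F}) (Some {G, uminus ` G})"
          and mem: "traj A \<sigma> x0 t \<in> G \<or> - traj A \<sigma> x0 t \<in> G" by blast
        have si: "\<sigma> t \<in> {1..m}" using sig by blast
        have nxM: "\<forall>x. normP (A (\<sigma> t) *v x) \<le> normP x" using assms(3) si by blast
        have AS: "A (\<sigma> t) \<in> A ` {1..m}" using si by blast
        from L_image[OF G nxM] show ?case
        proof
          assume int: "(\<lambda>x. A (\<sigma> t) *v x) ` G \<subseteq> interior polP"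
          have "face_edge (A ` {1..m}) (Some {G, uminus ` G}) None"
            unfolding face_edge_def face_node_def using G int AS by auto
          hence "(face_edge (A ` {1..m}))\<^sup>*\<^sup>* (Some {F, uminus ` F}) None"
            by (rule rtranclp.rtrancl_into_rtrancl[OF pth])
          thus ?case using np by blast
        next
          assume "\<exists>H. proper_open_face H \<and> (\<lambda>x. A (\<sigma> t) *v x) ` G \<subseteq> H"
          then obtain H where H: "proper_open_face H" "(\<lambda>x. A (\<sigma> t) *v x) ` G \<subseteq> H" by blast
          have "(\<lambda>x. A (\<sigma> t) *v x) ` G \<subseteq> pmset H" using H(2) unfolding pmset_def by blast
          hence "face_edge (A ` {1..m}) (Some {G, uminus ` G}) (Some {H, uminus ` H})"
            unfolding face_edge_def face_node_def using G H(1) AS by auto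
          hence pth': "(face_edge (A ` {1..m}))\<^sup>*\<^sup>* (Some {F, uminus ` F}) (Some {H, uminus ` H})"
            by (rule rtranclp.rtrancl_into_rtrancl[OF pth])
          have "traj A \<sigma> x0 (Suc t) \<in> H \<or> - traj A \<sigma> x0 (Suc t) \<in> H"
          proof (cases "traj A \<sigma> x0 t \<in> G")
            case True thus ?thesis using H(2) by auto
          next
            case False
            hence "- traj A \<sigma> x0 t \<in> G" using mem by blast
            hence "A (\<sigma> t) *v (- traj A \<sigma> x0 t) \<in> H" using H(2) by blast
            thus ?thesis by (simp add: linear_neg)
          qed
          thus ?case using H(1) pth' by blast
        qed
      qed
      have n1: "normP (traj A \<sigma> x0 t) = 1" for t
        using inv[of t] pof_boundary nP_uminus by metis
      obtain c where lim: "traj A \<sigma> x0 \<longlonglongrightarrow> c *\<^sub>R vec 1" using conv by blast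
      have "(\<lambda>t. traj A \<sigma> x0 t - c *\<^sub>R vec 1) \<longlonglongrightarrow> 0" using lim by (rule LIM_zero)
      hence lim0: "(\<lambda>t. norm (traj A \<sigma> x0 t - c *\<^sub>R vec 1)) \<longlonglongrightarrow> 0" by (rule tendsto_norm_zero)
      have "1 \<le> norm (traj A \<sigma> x0 t - c *\<^sub>R vec 1)" for t
        using n1[of t] nP_diff_const[of "traj A \<sigma> x0 t" c] nP_le_norm[of "traj A \<sigma> x0 t - c *\<^sub>R vec 1"]
        by simp
      hence "(1::real) \<le> 0" using LIMSEQ_le_const[OF lim0] by blast
      thus False by simp
    qed
  qed
next
  assume R: "\<forall>F. proper_open_face F \<longrightarrow> (face_edge (A ` {1..m}))\<^sup>*\<^sup>* (Some {F, uminus ` F}) None"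
  have wG: "\<exists>w. set w \<subseteq> {1..m} \<and> (\<forall>x\<in>G. normP (app A w x) < 1)" if G: "proper_open_face G" for G
  proof -
    have "\<forall>FF. Some {G, uminus ` G} = Some FF \<longrightarrow> (\<exists>w. set w \<subseteq> {1..m} \<and> (\<forall>x\<in>\<Union>FF. normP (app A w x) < 1))"
      by (rule path_word[OF assms(3)]) (use R G in blast)
    hence "\<exists>w. set w \<subseteq> {1..m} \<and> (\<forall>x\<in>\<Union>{G, uminus ` G}. normP (app A w x) < 1)" by blast
    thus ?thesis by auto
  qed
  obtain W where W: "set W \<subseteq> {1..m}" "\<forall>G\<in>{G. proper_open_face G}. \<forall>x\<in>G. normP (app A W x) < 1"
    using combine[OF assms(3) wG pof_finite] by blast
  have bd: "\<forall>x. normP x = 1 \<longrightarrow> normP (app A W x) < 1"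
    using boundary_face W(2) by blast
  obtain i0 :: 'n where True by blast
  have "\<exists>j::'n. j \<noteq> i0"
  proof (rule ccontr)
    assume "\<not> (\<exists>j::'n. j \<noteq> i0)"
    hence "(UNIV :: 'n set) = {i0}" by auto
    hence "CARD('n) = 1" by (metis card.empty card_insert_disjoint empty_iff finite.emptyI One_nat_def)
    thus False using assms(1) by simp
  qed
  then obtain j :: 'n where j: "j \<noteq> i0" by blast
  define e :: "real^'n" where "e = axis j 2"
  have ei0: "e $ i0 = 0" unfolding e_def using j by (simp add: axis_def)
  have en: "normP e = 1"
  proof (rule nP_unique[of _ _ j i0])
    fix k l show "e $ k - e $ l \<le> 2 * 1" unfolding e_def by (simp add: axis_def)
  next
    show "e $ j - e $ i0 = 2 * 1" unfolding e_def using j by (simp add: axis_def)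
  qed
  have Wne: "W \<noteq> []"
  proof
    assume "W = []"
    thus False using bd en by simp
  qed
  obtain \<gamma> where g: "0 \<le> \<gamma>" "\<gamma> < 1" "\<forall>x. normP (app A W x) \<le> \<gamma> * normP x"
    using contraction[OF assms(2) assms(3) W(1) bd en ei0] by blast
  show "\<exists>\<sigma>. (\<forall>t. \<sigma> t \<in> {1..m}) \<and> (\<forall>x0. \<exists>c::real. traj A \<sigma> x0 \<longlonglongrightarrow> c *\<^sub>R vec 1)"
    by (rule conv_from_word[OF assms(2) assms(3) W(1) Wne g])
qed

end
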